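(* Let $X$ be a finite topological space and let $Y$ be a $T_1$-space homotopy equivalent to $X$. Then $X$ is a disjoint union of contractible spaces. *)

theory Defs
  imports "HOL-Analysis.Analysis"
begin

end

theory Submission
  imports Defs
begin

lemma t1_finite_connected_sing:
  assumes "t1_space Y" "connectedin Y S" "finite S" "S \<noteq> {}"
  shows "\<exists>a. S = {a}"
proof (rule ccontr)
  assume "\<nexists>a. S = {a}"
  then have "S \<subseteq> Y derived_set_of S" using connectedin_imp_perfect_gen assms by blast
  moreover have "Y derived_set_of S = {}" using assms t1_space_derived_set_of_finite by blast
  ultimately show False using assms by blast
qed

lemma component_contractible:
  assumes fin: "finite (topspace X)" and Y: "t1_space Y"
    and f: "continuous_map X Y f" and g: "continuous_map Y X g"
    and hom: "homotopic_with (\<lambda>x. True) X X (g \<circ> f) id"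
    and C: "C \<in> connected_components_of X"
  shows "contractible_space (subtopology X C)"
proof -
  obtain H where H: "continuous_map (prod_topology (top_of_set {0..1::real}) X) X H"
    and H0: "\<And>x. H (0, x) = (g \<circ> f) x" and H1: "\<And>x. H (1, x) = id x"
    using hom unfolding homotopic_with_def by blast
  have CX: "C \<subseteq> topspace X" using C connected_components_of_subset by blast
  have Cc: "connectedin X C" using C connectedin_connected_components_of by blast
  obtain c where c: "c \<in> C" using C nonempty_connected_components_of by blast
  have "connectedin Y (f ` C)" using connectedin_continuous_map_image[OF f Cc] .
  moreover have "finite (f ` C)" using fin CX finite_subset by blast
  ultimately obtain b where b: "f ` C = {b}" using t1_finite_connected_sing[OF Y] c by blast
  define a where "a = g b"
  have fC: "\<And>x. x \<in> C \<Longrightarrow> g (f x) = a" using b a_def by (metis image_eqI singletonD)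
  have I: "connectedin (top_of_set {0..1::real}) {0..1}"
    by (simp add: connectedin_subtopology)
  have conn: "connectedin X (H ` ({0..1} \<times> C))"
    apply (rule connectedin_continuous_map_image[OF H])
    using I Cc by (simp add: connectedin_Times)
  have "\<not> disjnt C (H ` ({0..1} \<times> C))"
    using c H1 unfolding disjnt_def
    by (metis (no_types, lifting) atLeastAtMost_iff disjoint_iff id_apply image_eqI mem_Sigma_iff zero_le_one order_refl)
  then have sub: "H ` ({0..1} \<times> C) \<subseteq> C"
    using connected_components_of_maximal[OF C conn] by blast
  have aC: "a \<in> C" using sub H0 fC c by force
  have h1: "homotopic_with (\<lambda>x. True) (subtopology X C) (subtopology X C) (g \<circ> f) id"
    unfolding homotopic_with_def
  proof (intro exI conjI allI ballI)
    show "continuous_map (prod_topology (top_of_set {0..1}) (subtopology X C)) (subtopology X C) H"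
      unfolding continuous_map_in_subtopology
    proof
      show "continuous_map (prod_topology (top_of_set {0..1}) (subtopology X C)) X H"
        using H by (metis continuous_map_from_subtopology prod_topology_subtopology(2))
      show "H \<in> topspace (prod_topology (top_of_set {0..1}) (subtopology X C)) \<rightarrow> C"
        using sub CX by auto
    qed
  qed (auto simp: H0 H1)
  have h2: "homotopic_with (\<lambda>x. True) (subtopology X C) (subtopology X C) (g \<circ> f) (\<lambda>x. a)"
    apply (rule homotopic_with_equal)
    using homotopic_with_imp_continuous_maps[OF h1] fC by auto
  have "homotopic_with (\<lambda>x. True) (subtopology X C) (subtopology X C) id (\<lambda>x. a)"
    using homotopic_with_trans[OF homotopic_with_symD[OF h1] h2] .
  then show ?thesis unfolding contractible_space_def by blast
qed

theorem mainTheorem5: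
  fixes X :: "'a topology" and Y :: "'b topology"
  assumes "finite (topspace X)"
    and "t1_space Y"
    and "X homotopy_equivalent_space Y"
  shows "\<exists>\<U>. \<Union>\<U> = topspace X \<and> pairwise disjnt \<U> \<and>
           (\<forall>U\<in>\<U>. openin X U \<and> U \<noteq> {} \<and> contractible_space (subtopology X U))"
proof -
  obtain f g where f: "continuous_map X Y f" and g: "continuous_map Y X g"
    and hom: "homotopic_with (\<lambda>x. True) X X (g \<circ> f) id"
    using assms(3) unfolding homotopy_equivalent_space_def by blast
  show ?thesis
  proof (intro exI conjI ballI)
    show "\<Union>(connected_components_of X) = topspace X" by (rule Union_connected_components_of)
    show "pairwise disjnt (connected_components_of X)" by (rule pairwise_disjoint_connected_components_of)
    fix U assume U: "U \<in> connected_components_of X"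
    show "openin X U"
      using open_in_finite_connected_components[OF finite_connected_components_of_finite[OF assms(1)] U] .
    show "U \<noteq> {}" using U nonempty_connected_components_of by blast
    show "contractible_space (subtopology X U)"
      using component_contractible[OF assms(1,2) f g hom U] .
  qed
qed

end
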